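(* Let $D$ be the private information (e.g. a data mini-batch) taking values in a measurable space $\mathcal{S}$ with base measure $\mu$, with true prior density $f_D$, and let $W$ be the released information taking values in $\mathcal{W}$, produced from $D$ by a protection mechanism with likelihood $f_{W|D}(\cdot\mid\cdot)$ and induced posterior density $f_{D|W}(d\mid w)$. Assume that the attacker's prior belief density $f^{\mathcal{B}}_D$ satisfies $$\frac{f^{\mathcal{B}}_D(d)}{f_D(d)}\in[e^{-\epsilon},e^{\epsilon}]\quad\text{for all } d,$$ for some $\epsilon\ge 0$. Let $\epsilon_{p,m}\ge 0$ and suppose the mechanism guarantees $\epsilon_{p,m}$-maximum Bayesian privacy, i.e. $$\frac{f_{D|W}(d\mid w)}{f_D(d)}\in[e^{-\epsilon_{p,m}},e^{\epsilon_{p,m}}]\quad\text{for all } w\in\mathcal{W},\ d.$$ Then the average Bayesian privacy leakage $\epsilon_{p,a}=\sqrt{\mathrm{JS}(F^{\mathcal{A}}\parallel F^{\mathcal{B}})}$ satisfies $$\epsilon_{p,a}\le\frac{1}{\sqrt{2}}\sqrt{(\epsilon_{p,m}+\epsilon)\left(e^{\epsilon_{p,m}+\epsilon}-1\right)}.$$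
   Context: $F^{\mathcal{B}}$ is the attacker's belief distribution about $D$ before observing the released information, with density $f^{\mathcal{B}}_D$. $F^{\mathcal{A}}$ is the attacker's belief distribution about $D$ after observing the protected released information, with density $f^{\mathcal{A}}_D(d)=\int_{\mathcal{W}} f_{D|W}(d\mid w)\,dP_W(w)$, where $P_W$ is the distribution of the released (protected) information. With $F^{\mathcal{M}}=\tfrac12(F^{\mathcal{A}}+F^{\mathcal{B}})$, the Jensen–Shannon divergence is $\mathrm{JS}(F^{\mathcal{A}}\parallel F^{\mathcal{B}})=\tfrac12[\mathrm{KL}(F^{\mathcal{A}}\parallel F^{\mathcal{M}})+\mathrm{KL}(F^{\mathcal{B}}\parallel F^{\mathcal{M}})]$. The quantity $\epsilon_{p,a}$ is called the average Bayesian privacy (ABP) leakage. *)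

theory Defs
  imports "HOL-Probability.Probability"
begin

text \<open>Bayesian model: private information D in the measure space mu (base measure),
  released information W in the measure space nu; the protection mechanism is given by the
  likelihood density lik w d = f_{W|D}(w|d) w.r.t. nu; fD is the true prior density of D.\<close>

definition marginal_W :: "'d measure \<Rightarrow> ('d \<Rightarrow> real) \<Rightarrow> ('w \<Rightarrow> 'd \<Rightarrow> real) \<Rightarrow> 'w \<Rightarrow> real" where
  "marginal_W \<mu> fD lik w = (LINT d|\<mu>. lik w d * fD d)"

definition posterior :: "'d measure \<Rightarrow> ('d \<Rightarrow> real) \<Rightarrow> ('w \<Rightarrow> 'd \<Rightarrow> real) \<Rightarrow> 'd \<Rightarrow> 'w \<Rightarrow> real" where
  "posterior \<mu> fD lik d w = lik w d * fD d / marginal_W \<mu> fD lik w"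

definition dist_W :: "'d measure \<Rightarrow> 'w measure \<Rightarrow> ('d \<Rightarrow> real) \<Rightarrow> ('w \<Rightarrow> 'd \<Rightarrow> real) \<Rightarrow> 'w measure" where
  "dist_W \<mu> \<nu> fD lik = density \<nu> (\<lambda>w. ennreal (marginal_W \<mu> fD lik w))"

definition attacker_after :: "'d measure \<Rightarrow> 'w measure \<Rightarrow> ('d \<Rightarrow> real) \<Rightarrow> ('w \<Rightarrow> 'd \<Rightarrow> real) \<Rightarrow> 'd \<Rightarrow> real" where
  "attacker_after \<mu> \<nu> fD lik d = (LINT w|dist_W \<mu> \<nu> fD lik. posterior \<mu> fD lik d w)"

definition KL_dens :: "'d measure \<Rightarrow> ('d \<Rightarrow> real) \<Rightarrow> ('d \<Rightarrow> real) \<Rightarrow> real" where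
  "KL_dens \<mu> p q = (LINT x|\<mu>. p x * ln (p x / q x))"

definition JS_dens :: "'d measure \<Rightarrow> ('d \<Rightarrow> real) \<Rightarrow> ('d \<Rightarrow> real) \<Rightarrow> real" where
  "JS_dens \<mu> p q = (let m = (\<lambda>x. (p x + q x) / 2) in (KL_dens \<mu> p m + KL_dens \<mu> q m) / 2)"

definition avg_bayes_leakage :: "'d measure \<Rightarrow> 'w measure \<Rightarrow> ('d \<Rightarrow> real) \<Rightarrow> ('d \<Rightarrow> real) \<Rightarrow> ('w \<Rightarrow> 'd \<Rightarrow> real) \<Rightarrow> real" where
  "avg_bayes_leakage \<mu> \<nu> fD fB lik = sqrt (JS_dens \<mu> (attacker_after \<mu> \<nu> fD lik) fB)"

end

theory Submission
  imports Defs
begin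

lemma tanh_le: fixes t::real assumes "t \<ge> 0" shows "exp t - 1 \<le> t * (exp t + 1)"
proof -
  have "1 - t \<le> exp (-t)" using exp_ge_add_one_self[of "-t"] by simp
  hence "exp t * (1 - t) \<le> exp t * exp (-t)" by (intro mult_left_mono) auto
  hence "exp t - t * exp t \<le> 1" by (simp add: exp_minus field_simps)
  thus ?thesis using assms by (simp add: algebra_simps)
qed

lemma pw_sq: fixes a b e t :: real
  assumes a: "a > 0" and b: "b > 0" and ab: "a \<le> e * b" and ba: "b \<le> e * a" and t: "t \<ge> 0"
    and et: "e - 1 \<le> t * (e + 1)"
  shows "(a - b)^2 \<le> t * (e - 1) * b * (a + b)"
proof (cases "a \<ge> b")
  case True
  have e1: "e \<ge> 1"
  proof (rule ccontr)
    assume "\<not> e \<ge> 1"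
    hence "e * b < 1 * b" using b by (intro mult_strict_right_mono) auto
    thus False using True ab by simp
  qed
  have h1: "a - b \<le> (e - 1) * b" using ab by (simp add: algebra_simps)
  have "(a - b) * (e + 1) \<le> (e - 1) * (a + b)" using ab by (simp add: algebra_simps)
  also have "\<dots> \<le> t * (e + 1) * (a + b)" using et a b by (intro mult_right_mono) auto
  finally have h2: "a - b \<le> t * (a + b)" using e1 by (simp add: mult.commute mult.left_commute)
  have "(a - b)^2 = (a - b) * (a - b)" by (simp add: power2_eq_square)
  also have "\<dots> \<le> ((e - 1) * b) * (t * (a + b))"
    using h1 h2 True by (intro mult_mono) auto
  finally show ?thesis by (simp add: algebra_simps)
next
  case False
  have e1: "e \<ge> 1"
  proof (rule ccontr)
    assume "\<not> e \<ge> 1"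
    hence "e * a < 1 * a" using a by (intro mult_strict_right_mono) auto
    thus False using False ba by simp
  qed
  have "(e - 1) * a \<le> (e - 1) * b" using e1 False by (intro mult_left_mono) auto
  hence h1: "b - a \<le> (e - 1) * b" using ba by (simp add: algebra_simps)
  have "(b - a) * (e + 1) \<le> (e - 1) * (a + b)" using ba by (simp add: algebra_simps)
  also have "\<dots> \<le> t * (e + 1) * (a + b)" using et a b by (intro mult_right_mono) auto
  finally have h2: "b - a \<le> t * (a + b)" using e1 by (simp add: mult.commute mult.left_commute)
  have "(a - b)^2 = (b - a) * (b - a)" by (simp add: power2_eq_square algebra_simps)
  also have "\<dots> \<le> ((e - 1) * b) * (t * (a + b))"
    using h1 h2 False by (intro mult_mono) auto
  finally show ?thesis by (simp add: algebra_simps)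
qed

lemma pw: fixes a b t :: real
  assumes a: "a > 0" and b: "b > 0" and ab: "a \<le> exp t * b" and ba: "b \<le> exp t * a" and t: "t \<ge> 0"
  shows "a * ln (a / ((a + b)/2)) + b * ln (b / ((a + b)/2)) \<le> t * (exp t - 1) * b"
proof -
  have l1: "ln (a / ((a + b)/2)) \<le> a / ((a + b)/2) - 1" using a b by (intro ln_le_minus_one) auto
  have l2: "ln (b / ((a + b)/2)) \<le> b / ((a + b)/2) - 1" using a b by (intro ln_le_minus_one) auto
  have "a * ln (a / ((a + b)/2)) + b * ln (b / ((a + b)/2))
        \<le> a * (a / ((a + b)/2) - 1) + b * (b / ((a + b)/2) - 1)"
    using l1 l2 a b by (intro add_mono mult_left_mono) auto
  also have "\<dots> = (a - b)^2 / (a + b)"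
  proof -
    have ne: "a + b \<noteq> 0" using a b by simp
    have "a * (a / ((a + b)/2) - 1) = a * (a - b) / (a + b)" using ne by (simp add: field_simps)
    moreover have "b * (b / ((a + b)/2) - 1) = b * (b - a) / (a + b)" using ne by (simp add: field_simps)
    moreover have "a * (a - b) / (a + b) + b * (b - a) / (a + b) = (a * (a - b) + b * (b - a)) / (a + b)"
      by (simp add: add_divide_distrib)
    moreover have "a * (a - b) + b * (b - a) = (a - b)^2" by (simp add: power2_eq_square algebra_simps)
    ultimately show ?thesis by simp
  qed
  also have "\<dots> \<le> t * (exp t - 1) * b * (a + b) / (a + b)"
    using pw_sq[OF a b ab ba t tanh_le[OF t]] a b by (intro divide_right_mono) auto
  also have "\<dots> = t * (exp t - 1) * b" using a b by simp
  finally show ?thesis .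
qed

theorem theorem1:
  fixes \<mu> :: "'d measure" and \<nu> :: "'w measure"
    and fD fB :: "'d \<Rightarrow> real" and lik :: "'w \<Rightarrow> 'd \<Rightarrow> real"
    and \<epsilon> \<epsilon>pm :: real
  assumes "sigma_finite_measure \<mu>" and "sigma_finite_measure \<nu>"
    and "fD \<in> borel_measurable \<mu>" and "\<forall>d\<in>space \<mu>. fD d \<ge> 0"
    and "integrable \<mu> fD" and "(LINT d|\<mu>. fD d) = 1"
    and "fB \<in> borel_measurable \<mu>" and "\<forall>d\<in>space \<mu>. fB d \<ge> 0"
    and "integrable \<mu> fB" and "(LINT d|\<mu>. fB d) = 1"
    and "(\<lambda>(w, d). lik w d) \<in> borel_measurable (\<nu> \<Otimes>\<^sub>M \<mu>)"
    and "\<forall>w\<in>space \<nu>. \<forall>d\<in>space \<mu>. lik w d \<ge> 0"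
    and "\<forall>d\<in>space \<mu>. integrable \<nu> (\<lambda>w. lik w d) \<and> (LINT w|\<nu>. lik w d) = 1"
    and "\<epsilon> \<ge> 0"
    and "\<forall>d\<in>space \<mu>. fB d / fD d \<in> {exp (- \<epsilon>) .. exp \<epsilon>}"
    and "\<epsilon>pm \<ge> 0"
    and "\<forall>w\<in>space \<nu>. \<forall>d\<in>space \<mu>.
           posterior \<mu> fD lik d w / fD d \<in> {exp (- \<epsilon>pm) .. exp \<epsilon>pm}"
  shows "avg_bayes_leakage \<mu> \<nu> fD fB lik
           \<le> 1 / sqrt 2 * sqrt ((\<epsilon>pm + \<epsilon>) * (exp (\<epsilon>pm + \<epsilon>) - 1))"
proof -
  let ?S = "space \<mu>"
  note A = assms
  have fDpos: "fD d > 0" and fBpos: "fB d > 0" and r1: "fB d \<le> exp \<epsilon> * fD d"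
    and r2: "fD d \<le> exp \<epsilon> * fB d" if d: "d \<in> ?S" for d
  proof -
    have q: "exp (-\<epsilon>) \<le> fB d / fD d" "fB d / fD d \<le> exp \<epsilon>" using A(15) d by auto
    have "fB d / fD d > 0" using q(1) by (smt (verit) exp_gt_zero)
    moreover have "fD d \<ge> 0" "fB d \<ge> 0" using A(4,8) d by auto
    ultimately show p: "fD d > 0" "fB d > 0"
      by (auto simp: zero_less_divide_iff)
    show "fB d \<le> exp \<epsilon> * fD d" using q(2) p by (simp add: divide_le_eq mult.commute)
    have "exp (-\<epsilon>) * fD d \<le> fB d" using q(1) p by (simp add: le_divide_eq)
    hence "exp \<epsilon> * (exp (-\<epsilon>) * fD d) \<le> exp \<epsilon> * fB d" by (intro mult_left_mono) auto
    moreover have "exp \<epsilon> * (exp (-\<epsilon>) * fD d) = fD d" by (simp add: exp_minus field_simps)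
    ultimately show "fD d \<le> exp \<epsilon> * fB d" by linarith
  qed
  have Sne: "?S \<noteq> {}"
  proof
    assume "?S = {}"
    hence "(LINT d|\<mu>. fD d) = (LINT d|\<mu>. 0)" by (intro Bochner_Integration.integral_cong) auto
    thus False using A(6) by simp
  qed
  then obtain d0 where d0: "d0 \<in> ?S" by blast
  have prodm: "(\<lambda>(w, d). lik w d * fD d) \<in> borel_measurable (\<nu> \<Otimes>\<^sub>M \<mu>)"
  proof -
    have "(\<lambda>x. (case x of (w, d) \<Rightarrow> lik w d) * fD (snd x)) \<in> borel_measurable (\<nu> \<Otimes>\<^sub>M \<mu>)"
      by (intro borel_measurable_times A(11) measurable_compose[OF measurable_snd A(3)])
    thus ?thesis by (simp add: case_prod_beta')
  qed
  have margm: "marginal_W \<mu> fD lik \<in> borel_measurable \<nu>"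
    unfolding marginal_W_def[abs_def]
    using sigma_finite_measure.borel_measurable_lebesgue_integral[OF A(1), of "\<lambda>w d. lik w d * fD d" \<nu>] prodm
    by simp
  have likm: "(\<lambda>w. lik w d) \<in> borel_measurable \<nu>" if "d \<in> ?S" for d
    using measurable_Pair1[OF A(11) that] by simp
  have marg_nn: "marginal_W \<mu> fD lik w \<ge> 0" if "w \<in> space \<nu>" for w
    unfolding marginal_W_def using A(12) that fDpos
    by (intro Bochner_Integration.integral_nonneg) (metis mult_nonneg_nonneg less_imp_le)
  have marg_ne: "marginal_W \<mu> fD lik w \<noteq> 0" if w: "w \<in> space \<nu>" for w
  proof
    assume "marginal_W \<mu> fD lik w = 0"
    hence "posterior \<mu> fD lik d0 w = 0" unfolding posterior_def by simp
    moreover have "exp (-\<epsilon>pm) \<le> posterior \<mu> fD lik d0 w / fD d0" using A(17) w d0 by auto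
    ultimately show False by simp
  qed
  have att: "attacker_after \<mu> \<nu> fD lik d = fD d" if d: "d \<in> ?S" for d
  proof -
    have pm: "(\<lambda>w. posterior \<mu> fD lik d w) \<in> borel_measurable \<nu>"
      unfolding posterior_def
      by (intro borel_measurable_divide borel_measurable_times likm[OF d] margm borel_measurable_const)
    have "attacker_after \<mu> \<nu> fD lik d
        = (LINT w|\<nu>. marginal_W \<mu> fD lik w *\<^sub>R posterior \<mu> fD lik d w)"
      unfolding attacker_after_def dist_W_def
      by (rule integral_density[OF pm margm]) (auto intro: marg_nn)
    also have "\<dots> = (LINT w|\<nu>. lik w d * fD d)"
      by (intro Bochner_Integration.integral_cong) (auto simp: posterior_def marg_ne)
    also have "\<dots> = (LINT w|\<nu>. lik w d) * fD d" by simp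
    also have "\<dots> = fD d" using A(13) d by simp
    finally show ?thesis .
  qed
  define X where "X = (\<lambda>x. fD x * ln (fD x / ((fD x + fB x) / 2)))"
  define Y where "Y = (\<lambda>x. fB x * ln (fB x / ((fD x + fB x) / 2)))"
  have lnb: "\<bar>ln (a / ((a + b) / 2))\<bar> \<le> \<epsilon>" if ab: "a > 0" "b > 0" "a \<le> exp \<epsilon> * b" "b \<le> exp \<epsilon> * a" for a b
  proof -
    have e1: "exp \<epsilon> \<ge> 1" using A(14) by simp
    have "a \<le> exp \<epsilon> * a" using e1 ab by simp
    hence "2 * a \<le> exp \<epsilon> * (a + b)" using ab(3) by (simp add: algebra_simps)
    hence u: "a / ((a + b) / 2) \<le> exp \<epsilon>" using ab by (simp add: divide_le_eq mult.commute)
    have "a + b \<le> exp \<epsilon> * a + exp \<epsilon> * a" using \<open>a \<le> exp \<epsilon> * a\<close> ab(4) by linarith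
    hence "a + b \<le> 2 * a * exp \<epsilon>" by (simp add: algebra_simps)
    hence "exp (-\<epsilon>) * (a + b) \<le> exp (-\<epsilon>) * (2 * a * exp \<epsilon>)" by (intro mult_left_mono) auto
    moreover have "exp (-\<epsilon>) * (2 * a * exp \<epsilon>) = 2 * a" by (simp add: exp_minus field_simps)
    ultimately have "exp (-\<epsilon>) * (a + b) \<le> 2 * a" by linarith
    hence l: "exp (-\<epsilon>) \<le> a / ((a + b) / 2)" using ab by (simp add: le_divide_eq)
    have pos: "a / ((a + b) / 2) > 0" using ab by simp
    have "ln (a / ((a + b) / 2)) \<le> \<epsilon>" using ln_le_cancel_iff[of "a / ((a + b) / 2)" "exp \<epsilon>"] u pos by simp
    moreover have "-\<epsilon> \<le> ln (a / ((a + b) / 2))" using ln_le_cancel_iff[of "exp (-\<epsilon>)" "a / ((a + b) / 2)"] l pos by simp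
    ultimately show ?thesis by simp
  qed
  have Xm: "X \<in> borel_measurable \<mu>" "Y \<in> borel_measurable \<mu>" unfolding X_def Y_def using A(3,7) by measurable
  have Xi: "integrable \<mu> X"
  proof (rule Bochner_Integration.integrable_bound[of \<mu> "\<lambda>x. \<epsilon> * fD x"])
    show "integrable \<mu> (\<lambda>x. \<epsilon> * fD x)" using A(5) by simp
    show "X \<in> borel_measurable \<mu>" by (rule Xm(1))
    show "AE x in \<mu>. norm (X x) \<le> norm (\<epsilon> * fD x)"
    proof (rule AE_I2)
      fix x assume x: "x \<in> ?S"
      have "\<bar>X x\<bar> = fD x * \<bar>ln (fD x / ((fD x + fB x) / 2))\<bar>" using fDpos[OF x] by (simp add: X_def abs_mult)
      also have "\<dots> \<le> fD x * \<epsilon>" using lnb[OF fDpos[OF x] fBpos[OF x] r2[OF x] r1[OF x]] fDpos[OF x]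
        by (intro mult_left_mono) auto
      finally show "norm (X x) \<le> norm (\<epsilon> * fD x)" using A(14) fDpos[OF x] by (simp add: abs_mult mult.commute)
    qed
  qed
  have Yi: "integrable \<mu> Y"
  proof (rule Bochner_Integration.integrable_bound[of \<mu> "\<lambda>x. \<epsilon> * fB x"])
    show "integrable \<mu> (\<lambda>x. \<epsilon> * fB x)" using A(9) by simp
    show "Y \<in> borel_measurable \<mu>" by (rule Xm(2))
    show "AE x in \<mu>. norm (Y x) \<le> norm (\<epsilon> * fB x)"
    proof (rule AE_I2)
      fix x assume x: "x \<in> ?S"
      have eq: "fD x + fB x = fB x + fD x" by simp
      have "\<bar>Y x\<bar> = fB x * \<bar>ln (fB x / ((fB x + fD x) / 2))\<bar>" using fBpos[OF x] by (simp add: Y_def abs_mult add.commute)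
      also have "\<dots> \<le> fB x * \<epsilon>" using lnb[OF fBpos[OF x] fDpos[OF x] r1[OF x] r2[OF x]] fBpos[OF x]
        by (intro mult_left_mono) auto
      finally show "norm (Y x) \<le> norm (\<epsilon> * fB x)" using A(14) fBpos[OF x] by (simp add: abs_mult mult.commute)
    qed
  qed
  have JS: "JS_dens \<mu> (attacker_after \<mu> \<nu> fD lik) fB = (integral\<^sup>L \<mu> X + integral\<^sup>L \<mu> Y) / 2"
  proof -
    have "(LINT x|\<mu>. attacker_after \<mu> \<nu> fD lik x * ln (attacker_after \<mu> \<nu> fD lik x /
             ((attacker_after \<mu> \<nu> fD lik x + fB x) / 2))) = integral\<^sup>L \<mu> X"
      unfolding X_def by (intro Bochner_Integration.integral_cong) (auto simp: att)
    moreover have "(LINT x|\<mu>. fB x * ln (fB x /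
             ((attacker_after \<mu> \<nu> fD lik x + fB x) / 2))) = integral\<^sup>L \<mu> Y"
      unfolding Y_def by (intro Bochner_Integration.integral_cong) (auto simp: att)
    ultimately show ?thesis unfolding JS_dens_def KL_dens_def Let_def by simp
  qed
  have "integral\<^sup>L \<mu> X + integral\<^sup>L \<mu> Y = (LINT x|\<mu>. X x + Y x)"
    using Xi Yi by simp
  also have "\<dots> \<le> (LINT x|\<mu>. \<epsilon> * (exp \<epsilon> - 1) * fB x)"
  proof (rule integral_mono)
    show "integrable \<mu> (\<lambda>x. X x + Y x)" using Xi Yi by simp
    show "integrable \<mu> (\<lambda>x. \<epsilon> * (exp \<epsilon> - 1) * fB x)" using A(9) by simp
    fix x assume x: "x \<in> ?S"
    show "X x + Y x \<le> \<epsilon> * (exp \<epsilon> - 1) * fB x"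
      unfolding X_def Y_def using pw[OF fDpos[OF x] fBpos[OF x] r2[OF x] r1[OF x] A(14)] .
  qed
  also have "\<dots> = \<epsilon> * (exp \<epsilon> - 1)" using A(10) by simp
  also have "\<dots> \<le> (\<epsilon>pm + \<epsilon>) * (exp (\<epsilon>pm + \<epsilon>) - 1)"
    using A(14,16) by (intro mult_mono) auto
  finally have "JS_dens \<mu> (attacker_after \<mu> \<nu> fD lik) fB \<le> (\<epsilon>pm + \<epsilon>) * (exp (\<epsilon>pm + \<epsilon>) - 1) / 2"
    using JS by simp
  hence "avg_bayes_leakage \<mu> \<nu> fD fB lik \<le> sqrt ((\<epsilon>pm + \<epsilon>) * (exp (\<epsilon>pm + \<epsilon>) - 1) / 2)"
    unfolding avg_bayes_leakage_def by simp
  also have "\<dots> = 1 / sqrt 2 * sqrt ((\<epsilon>pm + \<epsilon>) * (exp (\<epsilon>pm + \<epsilon>) - 1))"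
    by (simp add: real_sqrt_divide)
  finally show ?thesis .
qed

end
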